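(* For $\mathbf F,\mathbf G\in\mathcal M^n$, if $\mathbf G\prec\mathbf F$, then $\mathcal D_n(\mathbf F)\subset\mathcal D_n(\mathbf G)$.
   Context: Work on an atomless probability space. $\mathcal M$ is the set of cdfs on $\mathbb{R}$. For $\mathbf H=(H_1,\dots,H_n)\in\mathcal M^n$, $\mathcal D_n(\mathbf H)=\{\text{cdf of } X_1+\dots+X_n: X_i\sim H_i,\ i=1,\dots,n\}$. $\mathcal Q_n$ is the set of $n\times n$ doubly stochastic matrices; for $\Lambda=(\Lambda_{ij})\in\mathcal Q_n$, $\Lambda\mathbf F$ is the tuple with $i$-th component $\sum_j\Lambda_{ij}F_j$. The majorization order on $\mathcal M^n$: $\mathbf G\prec\mathbf F$ means $\mathbf G=\Lambda\mathbf F$ for some $\Lambda\in\mathcal Q_n$. *)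

theory Defs
  imports "HOL-Probability.Probability"
begin

definition atomless :: "'a measure \<Rightarrow> bool" where
  "atomless M \<longleftrightarrow> (\<forall>A\<in>sets M. measure M A > 0 \<longrightarrow>
     (\<exists>B\<in>sets M. B \<subseteq> A \<and> 0 < measure M B \<and> measure M B < measure M A))"

definition is_cdf :: "(real \<Rightarrow> real) \<Rightarrow> bool" where
  "is_cdf F \<longleftrightarrow> mono F \<and> (\<forall>x. continuous (at_right x) F) \<and>
     (F \<longlongrightarrow> 0) at_bot \<and> (F \<longlongrightarrow> 1) at_top"

definition Dn :: "'a measure \<Rightarrow> nat \<Rightarrow> (nat \<Rightarrow> real \<Rightarrow> real) \<Rightarrow> (real \<Rightarrow> real) set" where
  "Dn M n H = {cdf (distr M borel (\<lambda>\<omega>. \<Sum>i<n. X i \<omega>)) | X.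
      \<forall>i<n. X i \<in> borel_measurable M \<and> cdf (distr M borel (X i)) = H i}"

definition doubly_stochastic :: "nat \<Rightarrow> (nat \<Rightarrow> nat \<Rightarrow> real) \<Rightarrow> bool" where
  "doubly_stochastic n L \<longleftrightarrow> (\<forall>i<n. \<forall>j<n. L i j \<ge> 0) \<and>
     (\<forall>i<n. (\<Sum>j<n. L i j) = 1) \<and> (\<forall>j<n. (\<Sum>i<n. L i j) = 1)"

definition majorized :: "nat \<Rightarrow> (nat \<Rightarrow> real \<Rightarrow> real) \<Rightarrow> (nat \<Rightarrow> real \<Rightarrow> real) \<Rightarrow> bool" where
  "majorized n G F \<longleftrightarrow> (\<exists>L. doubly_stochastic n L \<and>
     (\<forall>i<n. G i = (\<lambda>x. \<Sum>j<n. L i j * F j x)))"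

end

theory Submission
  imports Defs "HOL-Combinatorics.Permutations"
begin


lemma hall_sdr:
  fixes A :: "'i \<Rightarrow> 'b set"
  assumes "finite I" "\<forall>i\<in>I. finite (A i)" "\<forall>J\<subseteq>I. card J \<le> card (\<Union>(A ` J))"
  shows "\<exists>f. inj_on f I \<and> (\<forall>i\<in>I. f i \<in> A i)"
  using assms
proof (induction "card I" arbitrary: I A rule: less_induct)
  case less
  note fin = less.prems(1) and finA = less.prems(2) and H = less.prems(3)
  show ?case
  proof (cases "I = {}")
    case True then show ?thesis by auto
  next
    case ne: False
    show ?thesis
    proof (cases "\<exists>J. J \<noteq> {} \<and> J \<subset> I \<and> card (\<Union>(A ` J)) = card J")
      case True
      then obtain J where J: "J \<noteq> {}" "J \<subset> I" "card (\<Union>(A ` J)) = card J" by blast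
      have finJ: "finite J" using J fin finite_subset by blast
      have cJ: "card J < card I" using J fin psubset_card_mono by blast
      have "\<exists>f. inj_on f J \<and> (\<forall>i\<in>J. f i \<in> A i)"
        by (rule less.hyps[OF cJ finJ]) (use finA H J in auto)
      then obtain f1 where f1: "inj_on f1 J" "\<forall>i\<in>J. f1 i \<in> A i" by blast
      define AJ where "AJ = \<Union>(A ` J)"
      have finAJ: "finite AJ" unfolding AJ_def using finJ finA J by auto
      define B where "B = (\<lambda>i. A i - AJ)"
      have cIJ: "card (I - J) < card I" 
      proof -
        have "card (I - J) = card I - card J" using J finJ by (meson card_Diff_subset psubset_imp_subset)
        moreover have "card J > 0" using J finJ by (simp add: card_gt_0_iff)
        ultimately show ?thesis using cJ by linarith
      qed
      have HB: "\<forall>K\<subseteq>I - J. card K \<le> card (\<Union>(B ` K))"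
      proof (intro allI impI)
        fix K assume K: "K \<subseteq> I - J"
        have finK: "finite K" using K fin finite_subset by blast
        have eq: "\<Union>(B ` K) = \<Union>(A ` (K \<union> J)) - AJ" unfolding B_def AJ_def by auto
        have sub: "AJ \<subseteq> \<Union>(A ` (K \<union> J))" unfolding AJ_def by auto
        have finU: "finite (\<Union>(A ` (K \<union> J)))" using finK finJ finA K J by auto
        have "card (\<Union>(B ` K)) = card (\<Union>(A ` (K \<union> J))) - card AJ"
          unfolding eq using card_Diff_subset[OF finite_subset[OF sub finU] sub] .
        moreover have "card (K \<union> J) \<le> card (\<Union>(A ` (K \<union> J)))"
        proof -
          have "K \<union> J \<subseteq> I" using K J by auto
          then show ?thesis using H by blast
        qed
        moreover have "card (K \<union> J) = card K + card J"
          using K finK finJ by (subst card_Un_disjoint) auto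
        moreover have "card AJ = card J" using J unfolding AJ_def by simp
        ultimately show "card K \<le> card (\<Union>(B ` K))" by linarith
      qed
      have "\<exists>f. inj_on f (I - J) \<and> (\<forall>i\<in>I - J. f i \<in> B i)"
        by (rule less.hyps[OF cIJ]) (use fin finA HB in \<open>auto simp: B_def\<close>)
      then obtain f2 where f2: "inj_on f2 (I - J)" "\<forall>i\<in>I - J. f2 i \<in> B i" by blast
      define f where "f = (\<lambda>i. if i \<in> J then f1 i else f2 i)"
      have "inj_on f I"
      proof (rule inj_onI)
        fix x y assume xy: "x \<in> I" "y \<in> I" "f x = f y"
        show "x = y"
        proof (cases "x \<in> J"; cases "y \<in> J")
          assume "x \<in> J" "y \<in> J" then show ?thesis using xy f1 unfolding f_def by (auto dest: inj_onD)
        next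
          assume "x \<notin> J" "y \<notin> J" then show ?thesis using xy f2 unfolding f_def by (auto dest: inj_onD)
        next
          assume a: "x \<in> J" "y \<notin> J"
          then have "f x \<in> AJ" using f1 unfolding f_def AJ_def by auto
          moreover have "f y \<notin> AJ" using a xy(2) f2(2) unfolding f_def B_def by auto
          ultimately show ?thesis using xy by simp
        next
          assume a: "x \<notin> J" "y \<in> J"
          then have "f y \<in> AJ" using f1 unfolding f_def AJ_def by auto
          moreover have "f x \<notin> AJ" using a xy(1) f2(2) unfolding f_def B_def by auto
          ultimately show ?thesis using xy by simp
        qed
      qed
      moreover have "\<forall>i\<in>I. f i \<in> A i" using f1 f2 unfolding f_def B_def by auto
      ultimately show ?thesis by blast
    next
      case False
      have strict: "\<forall>J. J \<noteq> {} \<and> J \<subset> I \<longrightarrow> card J < card (\<Union>(A ` J))"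
      proof (intro allI impI)
        fix J assume J: "J \<noteq> {} \<and> J \<subset> I"
        then have "card J \<le> card (\<Union>(A ` J))" using H by blast
        moreover have "card (\<Union>(A ` J)) \<noteq> card J" using False J by blast
        ultimately show "card J < card (\<Union>(A ` J))" by linarith
      qed
      obtain i0 where i0: "i0 \<in> I" using ne by blast
      have "card {i0} \<le> card (A i0)" 
      proof -
        have "card {i0} \<le> card (\<Union>(A ` {i0}))" using H i0 by blast
        then show ?thesis by simp
      qed
      then have "A i0 \<noteq> {}" by auto
      then obtain a where a: "a \<in> A i0" by blast
      define B where "B = (\<lambda>i. A i - {a})"
      have cI': "card (I - {i0}) < card I" using i0 fin by (metis card_Diff1_less)
      have HB: "\<forall>K\<subseteq>I - {i0}. card K \<le> card (\<Union>(B ` K))"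
      proof (intro allI impI)
        fix K assume K: "K \<subseteq> I - {i0}"
        show "card K \<le> card (\<Union>(B ` K))"
        proof (cases "K = {}")
          case True then show ?thesis by simp
        next
          case False
          have finK: "finite K" using K fin finite_subset by blast
          have "K \<subset> I" using K i0 by auto
          then have "card K < card (\<Union>(A ` K))" using strict False by blast
          moreover have "\<Union>(B ` K) = \<Union>(A ` K) - {a}" unfolding B_def by auto
          moreover have "finite (\<Union>(A ` K))" using finK finA K by auto
          ultimately show ?thesis by (simp add: card_Diff_singleton_if del: Union_iff) linarith
        qed
      qed
      have "\<exists>f. inj_on f (I - {i0}) \<and> (\<forall>i\<in>I - {i0}. f i \<in> B i)"
        by (rule less.hyps[OF cI']) (use fin finA HB in \<open>auto simp: B_def\<close>)
      then obtain f2 where f2: "inj_on f2 (I - {i0})" "\<forall>i\<in>I - {i0}. f2 i \<in> B i" by blast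
      define f where "f = f2(i0 := a)"
      have "inj_on f I"
      proof (rule inj_onI)
        fix x y assume xy: "x \<in> I" "y \<in> I" "f x = f y"
        have nx: "x \<noteq> i0 \<Longrightarrow> f x \<noteq> a" using f2(2) xy(1) unfolding f_def B_def by auto
        have ny: "y \<noteq> i0 \<Longrightarrow> f y \<noteq> a" using f2(2) xy(2) unfolding f_def B_def by auto
        show "x = y"
        proof (cases "x = i0 \<or> y = i0")
          case True then show ?thesis using nx ny xy(3) unfolding f_def by (auto split: if_splits)
        next
          case False
          then have "f2 x = f2 y" using xy(3) unfolding f_def by auto
          then show ?thesis using f2(1) False xy(1,2) by (auto dest: inj_onD)
        qed
      qed
      moreover have "\<forall>i\<in>I. f i \<in> A i" using f2 a unfolding f_def B_def by auto
      ultimately show ?thesis by blast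
    qed
  qed
qed

lemma perm_in_support:
  fixes L :: "nat \<Rightarrow> nat \<Rightarrow> real"
  assumes nn: "\<forall>i<n. \<forall>j<n. L i j \<ge> 0" and rows: "\<forall>i<n. (\<Sum>j<n. L i j) = c"
    and cols: "\<forall>j<n. (\<Sum>i<n. L i j) = c" and c: "c > 0"
  shows "\<exists>\<sigma>. \<sigma> permutes {..<n} \<and> (\<forall>i<n. L i (\<sigma> i) > 0)"
proof -
  define A where "A = (\<lambda>i. {j. j < n \<and> L i j > 0})"
  have "\<forall>J\<subseteq>{..<n}. card J \<le> card (\<Union>(A ` J))"
  proof (intro allI impI)
    fix J assume J: "J \<subseteq> {..<n}"
    define N where "N = \<Union>(A ` J)"
    have NS: "N \<subseteq> {..<n}" unfolding N_def A_def by auto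
    have finJ: "finite J" using J finite_subset by blast
    have finN: "finite N" using NS finite_subset by blast
    have "(\<Sum>i\<in>J. \<Sum>j<n. L i j) = (\<Sum>i\<in>J. c)" using rows J by (intro sum.cong) auto
    then have "c * card J = (\<Sum>i\<in>J. \<Sum>j<n. L i j)" by simp
    also have "\<dots> = (\<Sum>i\<in>J. \<Sum>j\<in>N. L i j)"
    proof (rule sum.cong[OF refl])
      fix i assume i: "i \<in> J"
      have "(\<Sum>j<n. L i j) = (\<Sum>j\<in>N. L i j) + (\<Sum>j\<in>{..<n} - N. L i j)"
        using NS by (metis add.commute finite_lessThan sum.subset_diff)
      moreover have "(\<Sum>j\<in>{..<n} - N. L i j) = 0"
      proof (rule sum.neutral, intro ballI)
        fix j assume j: "j \<in> {..<n} - N"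
        then have "L i j \<le> 0" using i unfolding N_def A_def by auto
        then show "L i j = 0" using nn i J j by (meson DiffD1 lessThan_iff order_antisym subsetD)
      qed
      ultimately show "(\<Sum>j<n. L i j) = (\<Sum>j\<in>N. L i j)" by simp
    qed
    also have "\<dots> = (\<Sum>j\<in>N. \<Sum>i\<in>J. L i j)" by (rule sum.swap)
    also have "\<dots> \<le> (\<Sum>j\<in>N. \<Sum>i<n. L i j)"
    proof (rule sum_mono)
      fix j assume j: "j \<in> N"
      show "(\<Sum>i\<in>J. L i j) \<le> (\<Sum>i<n. L i j)"
        using J j NS nn by (intro sum_mono2) auto
    qed
    also have "\<dots> = (\<Sum>j\<in>N. c)" using cols NS by (intro sum.cong) auto
    also have "\<dots> = c * card N" by simp
    finally have "c * card J \<le> c * card N" .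
    then show "card J \<le> card (\<Union>(A ` J))" using c unfolding N_def by simp
  qed
  moreover have "\<forall>i\<in>{..<n}. finite (A i)" unfolding A_def by auto
  ultimately obtain f where f: "inj_on f {..<n}" "\<forall>i\<in>{..<n}. f i \<in> A i"
    using hall_sdr[of "{..<n}" A] by auto
  define \<sigma> where "\<sigma> = (\<lambda>i. if i < n then f i else i)"
  have "\<sigma> permutes {..<n}"
  proof (rule inj_imp_permutes)
    show "inj_on \<sigma> {..<n}" using f(1) unfolding \<sigma>_def inj_on_def by auto
  qed (use f(2) in \<open>auto simp: \<sigma>_def A_def\<close>)
  moreover have "\<forall>i<n. L i (\<sigma> i) > 0" using f(2) unfolding \<sigma>_def A_def by auto
  ultimately show ?thesis by blast
qed

lemma birkhoff:
  fixes L :: "nat \<Rightarrow> nat \<Rightarrow> real"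
  assumes "\<forall>i<n. \<forall>j<n. L i j \<ge> 0" and "\<forall>i<n. (\<Sum>j<n. L i j) = c"
    and "\<forall>j<n. (\<Sum>i<n. L i j) = c"
  shows "\<exists>w. (\<forall>\<sigma>. w \<sigma> \<ge> 0) \<and> (\<forall>i<n. \<forall>j<n.
     L i j = (\<Sum>\<sigma>\<in>{\<sigma>. \<sigma> permutes {..<n}}. w \<sigma> * (if \<sigma> i = j then 1 else 0)))"
  using assms
proof (induction "card {(i,j). i < n \<and> j < n \<and> L i j > 0}" arbitrary: L c rule: less_induct)
  case less
  note nn = less.prems(1) and rows = less.prems(2) and cols = less.prems(3)
  let ?P = "{\<sigma>. \<sigma> permutes {..<n}}"
  show ?case
  proof (cases "n > 0 \<and> c > 0")
    case False
    have "\<forall>i<n. \<forall>j<n. L i j = 0"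
    proof (intro allI impI)
      fix i j assume ij: "i < n" "j < n"
      then have c0: "c \<le> 0" using False by auto
      have "L i j \<le> (\<Sum>j<n. L i j)"
        using nn ij by (intro member_le_sum) auto
      moreover have "sum (L i) {..<n} = c" using rows ij by auto
      moreover have "0 \<le> L i j" using nn ij by auto
      ultimately show "L i j = 0" using c0 by linarith
    qed
    then show ?thesis by (intro exI[of _ "\<lambda>_. 0"]) auto
  next
    case True
    then have n: "n > 0" and c: "c > 0" by auto
    obtain \<sigma>0 where s0: "\<sigma>0 permutes {..<n}" "\<forall>i<n. L i (\<sigma>0 i) > 0"
      using perm_in_support[OF nn rows cols c] by blast
    have s0n: "\<And>i. i < n \<Longrightarrow> \<sigma>0 i < n" using s0(1) permutes_in_image by fastforce
    define m where "m = Min ((\<lambda>i. L i (\<sigma>0 i)) ` {..<n})"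
    have m_le: "\<And>i. i < n \<Longrightarrow> m \<le> L i (\<sigma>0 i)" unfolding m_def by auto
    obtain i1 where i1: "i1 < n" "L i1 (\<sigma>0 i1) = m"
    proof -
      have "m \<in> (\<lambda>i. L i (\<sigma>0 i)) ` {..<n}" unfolding m_def using n by (intro Min_in) auto
      then show ?thesis using that by auto
    qed
    have m_pos: "m > 0" using i1 s0(2) by auto
    define L' where "L' = (\<lambda>i j. L i j - (if \<sigma>0 i = j then m else 0))"
    have nn': "\<forall>i<n. \<forall>j<n. L' i j \<ge> 0" using nn m_le unfolding L'_def by auto
    have rows': "\<forall>i<n. (\<Sum>j<n. L' i j) = c - m"
    proof (intro allI impI)
      fix i assume i: "i < n"
      have "(\<Sum>j<n. L' i j) = (\<Sum>j<n. L i j) - (\<Sum>j<n. (if \<sigma>0 i = j then m else 0))"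
        unfolding L'_def by (simp add: sum_subtractf)
      also have "(\<Sum>j<n. (if \<sigma>0 i = j then m else 0)) = m" using s0n[OF i] by simp
      finally show "(\<Sum>j<n. L' i j) = c - m" using rows i by simp
    qed
    have cols': "\<forall>j<n. (\<Sum>i<n. L' i j) = c - m"
    proof (intro allI impI)
      fix j assume j: "j < n"
      have "(\<Sum>i<n. L' i j) = (\<Sum>i<n. L i j) - (\<Sum>i<n. (if \<sigma>0 i = j then m else 0))"
        unfolding L'_def by (simp add: sum_subtractf)
      also have "(\<Sum>i<n. (if \<sigma>0 i = j then m else 0)) = (\<Sum>i<n. (if i = j then m else 0))"
        using sum.permute[OF s0(1), of "\<lambda>i. if i = j then m else 0"] by (simp add: o_def)
      also have "\<dots> = m" using j by simp
      finally show "(\<Sum>i<n. L' i j) = c - m" using cols j by simp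
    qed
    let ?S = "{(i,j). i < n \<and> j < n \<and> L i j > 0}"
    let ?S' = "{(i,j). i < n \<and> j < n \<and> L' i j > 0}"
    have "?S' \<subseteq> ?S - {(i1, \<sigma>0 i1)}"
      using nn m_pos i1 unfolding L'_def by (auto split: if_splits)
    moreover have "(i1, \<sigma>0 i1) \<in> ?S" using i1 s0n m_pos by auto
    moreover have "finite ?S" by (rule finite_subset[of _ "{..<n} \<times> {..<n}"]) auto
    ultimately have lt: "card ?S' < card ?S"
      by (meson card_Diff1_less card_mono finite_Diff le_less_trans)
    obtain w' where w': "\<forall>\<sigma>. w' \<sigma> \<ge> 0" "\<forall>i<n. \<forall>j<n.
       L' i j = (\<Sum>\<sigma>\<in>?P. w' \<sigma> * (if \<sigma> i = j then 1 else 0))"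
      using less.hyps[OF lt nn' rows' cols'] by blast
    define w where "w = (\<lambda>\<sigma>. w' \<sigma> + (if \<sigma> = \<sigma>0 then m else 0))"
    have "\<forall>\<sigma>. w \<sigma> \<ge> 0" using w'(1) m_pos unfolding w_def by auto
    moreover have "\<forall>i<n. \<forall>j<n. L i j = (\<Sum>\<sigma>\<in>?P. w \<sigma> * (if \<sigma> i = j then 1 else 0))"
    proof (intro allI impI)
      fix i j assume ij: "i < n" "j < n"
      have fP: "finite ?P" by (simp add: finite_permutations)
      have "(\<Sum>\<sigma>\<in>?P. w \<sigma> * (if \<sigma> i = j then 1 else 0)) =
        (\<Sum>\<sigma>\<in>?P. w' \<sigma> * (if \<sigma> i = j then 1 else 0)) +
        (\<Sum>\<sigma>\<in>?P. (if \<sigma> = \<sigma>0 then m * (if \<sigma>0 i = j then 1 else 0) else 0))"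
        unfolding w_def by (subst sum.distrib[symmetric]) (rule sum.cong; auto)
      also have "(\<Sum>\<sigma>\<in>?P. (if \<sigma> = \<sigma>0 then m * (if \<sigma>0 i = j then 1 else 0) else 0))
          = m * (if \<sigma>0 i = j then 1 else 0)"
        using s0(1) fP by (simp add: sum.delta')
      finally have eq: "(\<Sum>\<sigma>\<in>?P. w \<sigma> * (if \<sigma> i = j then 1 else 0)) =
        (\<Sum>\<sigma>\<in>?P. w' \<sigma> * (if \<sigma> i = j then 1 else 0)) + m * (if \<sigma>0 i = j then 1 else 0)" .
      have "L' i j = (\<Sum>\<sigma>\<in>?P. w' \<sigma> * (if \<sigma> i = j then 1 else 0))" using w'(2) ij by blast
      then show "L i j = (\<Sum>\<sigma>\<in>?P. w \<sigma> * (if \<sigma> i = j then 1 else 0))"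
        unfolding eq L'_def by (cases "\<sigma>0 i = j") simp_all
    qed
    ultimately show ?thesis by blast
  qed
qed



lemma (in prob_space) atomless_small:
  assumes al: "atomless M" and A: "A \<in> events" "prob A > 0" and e: "e > 0"
  shows "\<exists>B\<in>events. B \<subseteq> A \<and> 0 < prob B \<and> prob B < e"
proof -
  have step: "\<forall>k. \<exists>B\<in>events. B \<subseteq> A \<and> 0 < prob B \<and> prob B \<le> prob A / 2^k"
  proof
    fix k show "\<exists>B\<in>events. B \<subseteq> A \<and> 0 < prob B \<and> prob B \<le> prob A / 2^k"
    proof (induction k)
      case 0 then show ?case using A by auto
    next
      case (Suc k)
      then obtain B where B: "B \<in> events" "B \<subseteq> A" "0 < prob B" "prob B \<le> prob A / 2^k" by blast
      obtain C where C: "C \<in> events" "C \<subseteq> B" "0 < prob C" "prob C < prob B"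
        using al B unfolding atomless_def by blast
      show ?case
      proof (cases "prob C \<le> prob B / 2")
        case True
        have "prob A / 2^Suc k = (prob A / 2^k) / 2" by simp
        then show ?thesis using C B True by (intro bexI[of _ C]) auto
      next
        case False
        have d: "prob (B - C) = prob B - prob C" using C B by (simp add: finite_measure_Diff)
        have "prob A / 2^Suc k = (prob A / 2^k) / 2" by simp
        then show ?thesis using C B False d by (intro bexI[of _ "B - C"]) auto
      qed
    qed
  qed
  obtain k where k: "(1/2::real)^k < e" using real_arch_pow_inv[OF e, of "1/2"] by auto
  obtain B where B: "B \<in> events" "B \<subseteq> A" "0 < prob B" "prob B \<le> prob A / 2^k" using step by blast
  have "prob A / 2^k \<le> (1/2::real)^k" using prob_le_1[of A] by (simp add: power_one_over divide_right_mono)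
  then show ?thesis using B k by (intro bexI[of _ B]) auto
qed

lemma (in prob_space) atomless_ivt:
  assumes al: "atomless M" and A: "A \<in> events" and t: "0 \<le> t" "t \<le> prob A"
  shows "\<exists>B\<in>events. B \<subseteq> A \<and> prob B = t"
proof -
  define V where "V = (\<lambda>B. {prob C | C. C \<in> events \<and> C \<subseteq> A - B \<and> prob C \<le> t - prob B})"
  define s where "s = (\<lambda>B. Sup (V B))"
  define good where "good = (\<lambda>B C. C \<in> events \<and> C \<subseteq> A - B \<and> prob C \<le> t - prob B \<and> s B \<le> 2 * prob C)"
  define nxt where "nxt = (\<lambda>B. B \<union> (SOME C. good B C))"
  have Vne: "V B \<noteq> {}" if "prob B \<le> t" for B
    unfolding V_def using that by (auto intro!: exI[of _ "{}"])
  have Vbdd: "bdd_above (V B)" for B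
    unfolding V_def by (auto intro!: bdd_aboveI[of _ 1])
  have ex_good: "\<exists>C. good B C" if Bt: "prob B \<le> t" for B
  proof (cases "s B \<le> 0")
    case True
    then show ?thesis using Bt unfolding good_def by (intro exI[of _ "{}"]) auto
  next
    case False
    then have "s B / 2 < Sup (V B)" unfolding s_def by auto
    then obtain v where "v \<in> V B" "s B / 2 < v"
      using less_cSup_iff[OF Vne[OF Bt] Vbdd] by blast
    then show ?thesis unfolding V_def good_def by auto
  qed
  define Bs where "Bs = (\<lambda>k. (nxt ^^ k) {})"
  define Cs where "Cs = (\<lambda>k. SOME C. good (Bs k) C)"
  have Bs_Suc: "Bs (Suc k) = Bs k \<union> Cs k" for k unfolding Bs_def Cs_def nxt_def by simp
  have inv: "Bs k \<in> events \<and> Bs k \<subseteq> A \<and> prob (Bs k) \<le> t \<and> good (Bs k) (Cs k)" for k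
  proof (induction k)
    case 0
    have "prob (Bs 0) \<le> t" using t by (simp add: Bs_def)
    then have "good (Bs 0) (Cs 0)" unfolding Cs_def using ex_good by (metis someI_ex)
    then show ?case using t by (simp add: Bs_def)
  next
    case (Suc k)
    then have g: "good (Bs k) (Cs k)" by blast
    have pS: "prob (Bs (Suc k)) = prob (Bs k) + prob (Cs k)"
      unfolding Bs_Suc using Suc g unfolding good_def by (intro finite_measure_Union) auto
    have "prob (Bs (Suc k)) \<le> t" using pS g unfolding good_def by linarith
    moreover have "Bs (Suc k) \<in> events" "Bs (Suc k) \<subseteq> A" using Suc g unfolding Bs_Suc good_def by auto
    moreover have "good (Bs (Suc k)) (Cs (Suc k))" unfolding Cs_def using ex_good calculation(1) by (metis someI_ex)
    ultimately show ?case by blast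
  qed
  have pS: "prob (Bs (Suc k)) = prob (Bs k) + prob (Cs k)" for k
    unfolding Bs_Suc using inv[of k] unfolding good_def by (intro finite_measure_Union) auto
  have inc: "incseq Bs" unfolding Bs_Suc by (intro incseq_SucI) (auto simp: Bs_Suc)
  define B where "B = (\<Union>k. Bs k)"
  have Bev: "B \<in> events" using inv unfolding B_def by auto
  have BA: "B \<subseteq> A" using inv unfolding B_def by auto
  have lim: "(\<lambda>k. prob (Bs k)) \<longlonglongrightarrow> prob B"
    unfolding B_def using inv inc by (intro finite_Lim_measure_incseq) auto
  have Ble: "prob B \<le> t" using lim inv by (intro LIMSEQ_le_const2[OF lim]) auto
  have "prob B = t"
  proof (rule ccontr)
    assume "prob B \<noteq> t"
    then have Blt: "prob B < t" using Ble by auto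
    have pAB: "prob (A - B) = prob A - prob B" using Bev BA A by (simp add: finite_measure_Diff)
    then have "prob (A - B) > 0" using Blt t by auto
    then obtain D where D: "D \<in> events" "D \<subseteq> A - B" "0 < prob D" "prob D < t - prob B"
      using atomless_small[OF al _ _, of "A - B" "t - prob B"] Bev A Blt by auto
    have BkB: "prob (Bs k) \<le> prob B" for k
      using inv Bev by (intro finite_measure_mono) (auto simp: B_def)
    have Ck: "prob D \<le> 2 * prob (Cs k)" for k
    proof -
      have "D \<subseteq> A - Bs k" using D(2) unfolding B_def by auto
      moreover have "prob D \<le> t - prob (Bs k)" using D(4) BkB[of k] by linarith
      ultimately have "prob D \<in> V (Bs k)" unfolding V_def using D(1) by blast
      then have "prob D \<le> s (Bs k)" unfolding s_def using Vbdd by (intro cSup_upper) auto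
      then show ?thesis using inv[of k] unfolding good_def by linarith
    qed
    have grow: "real k * prob D / 2 \<le> prob (Bs k)" for k
    proof (induction k)
      case 0 then show ?case by (simp add: Bs_def)
    next
      case (Suc k) then show ?case using pS[of k] Ck[of k] by (simp add: field_simps)
    qed
    obtain k where k: "real k > 2 / prob D" using reals_Archimedean2 by blast
    then have "real k * prob D / 2 > 1" using D by (simp add: field_simps)
    then have "prob (Bs k) > 1" using grow[of k] by linarith
    then show False using prob_le_1[of "Bs k"] by linarith
  qed
  then show ?thesis using Bev BA by blast
qed

lemma (in prob_space) atomless_partition:
  assumes al: "atomless M" and fin: "finite S" "S \<noteq> {}" and w: "\<forall>s\<in>S. w s \<ge> 0"
    and A: "A \<in> events" "sum w S = prob A"
  shows "\<exists>Om. (\<forall>s\<in>S. Om s \<in> events \<and> Om s \<subseteq> A \<and> prob (Om s) = w s) \<and>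
     disjoint_family_on Om S \<and> (\<Union>s\<in>S. Om s) = A"
  using fin w A
proof (induction S arbitrary: A rule: finite_ne_induct)
  case (singleton s)
  then show ?case by (intro exI[of _ "\<lambda>_. A"]) (auto simp: disjoint_family_on_def)
next
  case (insert s S)
  have "sum w S \<ge> 0" using insert.prems by (intro sum_nonneg) auto
  then have ws: "w s \<le> prob A" "w s \<ge> 0" using insert by auto
  obtain B where B: "B \<in> events" "B \<subseteq> A" "prob B = w s"
    using atomless_ivt[OF al insert.prems(2) ws(2) ws(1)] by blast
  have "prob (A - B) = prob A - w s" using B insert.prems by (simp add: finite_measure_Diff)
  then have "sum w S = prob (A - B)" using insert by auto
  then obtain Om where Om: "\<forall>s\<in>S. Om s \<in> events \<and> Om s \<subseteq> A - B \<and> prob (Om s) = w s"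
     "disjoint_family_on Om S" "(\<Union>s\<in>S. Om s) = A - B"
    using insert.IH[of "A - B"] insert.prems B by auto
  define Om' where "Om' = Om(s := B)"
  have "\<forall>x\<in>insert s S. Om' x \<in> events \<and> Om' x \<subseteq> A \<and> prob (Om' x) = w x"
    using Om(1) B insert.hyps unfolding Om'_def by auto
  moreover have "disjoint_family_on Om' (insert s S)"
  proof -
    have "Om x \<inter> B = {}" if "x \<in> S" for x using Om(1) that by auto
    moreover have "s \<notin> S" using insert.hyps by auto
    ultimately show ?thesis using Om(2) unfolding Om'_def disjoint_family_on_def by auto
  qed
  moreover have "(\<Union>x\<in>insert s S. Om' x) = A"
  proof -
    have sS: "s \<notin> S" using insert.hyps by auto
    have "(\<Union>x\<in>S. Om' x) = (\<Union>x\<in>S. Om x)" unfolding Om'_def using sS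
      by (intro SUP_cong) auto
    then have "(\<Union>x\<in>S. Om' x) = A - B" using Om(3) by simp
    moreover have "(\<Union>x\<in>insert s S. Om' x) = Om' s \<union> (\<Union>x\<in>S. Om' x)" by simp
    moreover have "Om' s = B" unfolding Om'_def by simp
    ultimately show ?thesis using B by auto
  qed
  ultimately show ?case by blast
qed

definition half_set :: "'a measure \<Rightarrow> 'a set \<Rightarrow> 'a set" where
  "half_set M X = (SOME B. B \<in> sets M \<and> B \<subseteq> X \<and> measure M B = measure M X / 2)"

fun lev :: "'a measure \<Rightarrow> 'a set \<Rightarrow> nat \<Rightarrow> nat \<Rightarrow> 'a set" where
  "lev M A 0 m = (if m = 0 then {} else A)"
| "lev M A (Suc k) m = (if even m then lev M A k (m div 2)
     else lev M A k (m div 2) \<union> half_set M (lev M A k (Suc (m div 2)) - lev M A k (m div 2)))"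

lemma (in prob_space) half_set:
  assumes al: "atomless M" and X: "X \<in> events"
  shows "half_set M X \<in> events \<and> half_set M X \<subseteq> X \<and> prob (half_set M X) = prob X / 2"
proof -
  have "\<exists>B\<in>events. B \<subseteq> X \<and> prob B = prob X / 2"
    by (rule atomless_ivt[OF al X]) auto
  then have "\<exists>B. B \<in> sets M \<and> B \<subseteq> X \<and> measure M B = measure M X / 2" by blast
  then show ?thesis unfolding half_set_def by (rule someI_ex)
qed

context prob_space
begin

lemma lev_sets:
  assumes al: "atomless M" and A: "A \<in> events"
  shows "lev M A k m \<in> events \<and> lev M A k m \<subseteq> A"
proof (induction k arbitrary: m)
  case 0 then show ?case using A by auto
next
  case (Suc k)
  have "lev M A k (Suc (m div 2)) - lev M A k (m div 2) \<in> events" using Suc by auto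
  from half_set[OF al this] show ?case using Suc by auto
qed

lemma lev_Suc_mono:
  assumes al: "atomless M" and A: "A \<in> events"
  shows "lev M A k m \<subseteq> lev M A k (Suc m)"
proof (induction k arbitrary: m)
  case 0 then show ?case by auto
next
  case (Suc k)
  have hs: "half_set M (lev M A k (Suc q) - lev M A k q) \<subseteq> lev M A k (Suc q) - lev M A k q" for q
    using half_set[OF al, of "lev M A k (Suc q) - lev M A k q"] lev_sets[OF al A] by auto
  show ?case
  proof (cases "even m")
    case True
    then have "Suc m div 2 = m div 2" by presburger
    then show ?thesis using True by auto
  next
    case False
    then have "Suc m div 2 = Suc (m div 2)" by presburger
    moreover have "even (Suc m)" using False by simp
    ultimately show ?thesis using False hs[of "m div 2"] Suc[of "m div 2"] by auto
  qed
qed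

lemma lev_mono:
  assumes al: "atomless M" and A: "A \<in> events" and "m \<le> m'"
  shows "lev M A k m \<subseteq> lev M A k m'"
  using lev_Suc_mono[OF al A] assms(3) by (rule lift_Suc_mono_le)

lemma lev_top:
  assumes al: "atomless M" and A: "A \<in> events"
  shows "2^k \<le> m \<Longrightarrow> lev M A k m = A"
proof (induction k arbitrary: m)
  case 0 then show ?case by auto
next
  case (Suc k)
  have "(2::nat)^Suc k div 2 \<le> m div 2" by (rule div_le_mono[OF Suc.prems])
  then have "2^k \<le> m div 2" by simp
  then have e: "lev M A k (m div 2) = A" "lev M A k (Suc (m div 2)) = A" using Suc.IH by auto
  have "half_set M (lev M A k (Suc (m div 2)) - lev M A k (m div 2)) \<subseteq> {}"
    using half_set[OF al, of "{}"] unfolding e by auto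
  then show ?case using e by auto
qed

lemma lev_double: "lev M A (Suc k) (2 * m) = lev M A k m"
  by simp

lemma lev_pow: "lev M A (k + j) (m * 2^j) = lev M A k m"
proof (induction j)
  case 0 then show ?case by simp
next
  case (Suc j)
  have "lev M A (k + Suc j) (m * 2^Suc j) = lev M A (Suc (k + j)) (2 * (m * 2^j))"
    by (simp add: mult.commute mult.left_commute)
  also have "\<dots> = lev M A (k + j) (m * 2^j)" by (rule lev_double)
  finally show ?case using Suc by simp
qed

lemma lev_prob:
  assumes al: "atomless M" and A: "A \<in> events"
  shows "m \<le> 2^k \<Longrightarrow> prob (lev M A k m) = real m / 2^k * prob A"
proof (induction k arbitrary: m)
  case 0 then show ?case by (cases "m = 0") auto
next
  case (Suc k)
  show ?case
  proof (cases "even m")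
    case True
    then obtain q where q: "m = 2 * q" by blast
    then have "q \<le> 2^k" using Suc.prems by simp
    then show ?thesis using Suc.IH[of q] q by simp
  next
    case False
    then obtain q where q: "m = 2 * q + 1" using oddE by blast
    then have qk: "Suc q \<le> 2^k" using Suc.prems by simp
    have md: "m div 2 = q" using q by simp
    let ?D = "lev M A k (Suc q) - lev M A k q"
    have sub: "lev M A k q \<subseteq> lev M A k (Suc q)" by (rule lev_Suc_mono[OF al A])
    have evs: "lev M A k q \<in> events" "lev M A k (Suc q) \<in> events" using lev_sets[OF al A] by auto
    have D: "?D \<in> events" using evs by auto
    have h: "half_set M ?D \<in> events" "half_set M ?D \<subseteq> ?D" "prob (half_set M ?D) = prob ?D / 2"
      using half_set[OF al D] by auto
    have hp: "prob (half_set M ?D) = (prob (lev M A k (Suc q)) - prob (lev M A k q)) / 2"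
      using evs sub h(3) by (simp add: finite_measure_Diff)
    have "prob (lev M A (Suc k) m) = prob (lev M A k q \<union> half_set M ?D)"
      using False md by simp
    also have "\<dots> = prob (lev M A k q) + prob (half_set M ?D)"
      using h evs by (intro finite_measure_Union) auto
    also have "\<dots> = prob (lev M A k q) + (prob (lev M A k (Suc q)) - prob (lev M A k q)) / 2"
      using hp by simp
    also have "\<dots> = real q / 2^k * prob A + (real (Suc q) / 2^k * prob A - real q / 2^k * prob A) / 2"
      using Suc.IH[of q] Suc.IH[of "Suc q"] qk by simp
    also have "\<dots> = real m / 2^Suc k * prob A" using q by (simp add: field_simps)
    finally show ?thesis .
  qed
qed

lemma atomless_uniform:
  assumes al: "atomless M" and A: "A \<in> events"
  shows "\<exists>U\<in>borel_measurable M. (\<forall>\<omega>. 0 \<le> U \<omega> \<and> U \<omega> \<le> 1) \<and>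
    (\<forall>c. 0 \<le> c \<longrightarrow> c \<le> 1 \<longrightarrow> prob (A \<inter> {\<omega>\<in>space M. U \<omega> \<le> c}) = c * prob A) \<and>
    prob (A \<inter> {\<omega>\<in>space M. U \<omega> \<le> 0 \<or> 1 \<le> U \<omega>}) = 0"
proof -
  let ?L = "lev M A"
  have Lev: "?L k m \<in> events" "?L k m \<subseteq> A" for k m using lev_sets[OF al A] by auto
  have Asp: "A \<subseteq> space M" using A sets.sets_into_space by auto
  define D where "D \<omega> = {real m / 2^k | k m. \<omega> \<in> ?L k m}" for \<omega>
  define U where "U \<omega> = (if \<omega> \<in> A then Inf (D \<omega>) else 0)" for \<omega>
  have Dne: "1 \<in> D \<omega>" if "\<omega> \<in> A" for \<omega>
    unfolding D_def using that by (intro CollectI exI[of _ 0] exI[of _ 1]) auto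
  have D0: "0 \<le> d" if "d \<in> D \<omega>" for d \<omega> using that unfolding D_def by auto
  have Dbdd: "bdd_below (D \<omega>)" for \<omega> using D0 by (intro bdd_belowI[of _ 0]) auto
  have U01: "0 \<le> U \<omega> \<and> U \<omega> \<le> 1" for \<omega>
  proof (cases "\<omega> \<in> A")
    case True
    then have "D \<omega> \<noteq> {}" using Dne by auto
    then have "0 \<le> Inf (D \<omega>)" using D0 by (intro cInf_greatest) auto
    moreover have "Inf (D \<omega>) \<le> 1" using Dne[OF True] Dbdd by (intro cInf_lower) auto
    ultimately show ?thesis using True unfolding U_def by auto
  qed (auto simp: U_def)
  have Uless: "U \<omega> < c \<longleftrightarrow> (\<exists>k m. \<omega> \<in> ?L k m \<and> real m / 2^k < c)" if "\<omega> \<in> A" for \<omega> c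
  proof -
    have "D \<omega> \<noteq> {}" using Dne that by auto
    then have "U \<omega> < c \<longleftrightarrow> (\<exists>d\<in>D \<omega>. d < c)" unfolding U_def using that cInf_less_iff[OF _ Dbdd] by auto
    also have "\<dots> \<longleftrightarrow> (\<exists>k m. \<omega> \<in> ?L k m \<and> real m / 2^k < c)" unfolding D_def by auto
    finally show ?thesis .
  qed
  define E where "E c = (\<Union>k. \<Union>m. (if real m / 2^k < c then ?L k m else {}))" for c
  have Eev: "E c \<in> events" for c
  proof -
    have "(\<Union>m. (if real m / 2^k < c then ?L k m else {})) \<in> events" for k
      using Lev by (intro sets.countable_UN) auto
    then show ?thesis unfolding E_def by (intro sets.countable_UN) auto
  qed
  have EA: "E c \<subseteq> A" for c using Lev(2) unfolding E_def by (auto split: if_splits)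
  have AU: "A \<inter> {\<omega>\<in>space M. U \<omega> < c} = E c" for c
  proof
    show "A \<inter> {\<omega>\<in>space M. U \<omega> < c} \<subseteq> E c"
    proof
      fix \<omega> assume "\<omega> \<in> A \<inter> {\<omega>\<in>space M. U \<omega> < c}"
      then obtain k m where "\<omega> \<in> ?L k m" "real m / 2^k < c" using Uless by blast
      then show "\<omega> \<in> E c" unfolding E_def by auto
    qed
    show "E c \<subseteq> A \<inter> {\<omega>\<in>space M. U \<omega> < c}"
    proof
      fix \<omega> assume w: "\<omega> \<in> E c"
      then have "\<omega> \<in> A" using EA by auto
      moreover from w obtain k m where "\<omega> \<in> ?L k m" "real m / 2^k < c" unfolding E_def by (auto split: if_splits)
      ultimately show "\<omega> \<in> A \<inter> {\<omega>\<in>space M. U \<omega> < c}" using Uless Asp by blast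
    qed
  qed
  have Umeas: "U \<in> borel_measurable M"
  proof (unfold borel_measurable_iff_less, intro allI)
    fix c
    have "{\<omega>\<in>space M. U \<omega> < c} = E c \<union> (if 0 < c then space M - A else {})"
    proof -
      have "{\<omega>\<in>space M. U \<omega> < c} = (A \<inter> {\<omega>\<in>space M. U \<omega> < c}) \<union> ((space M - A) \<inter> {\<omega>\<in>space M. U \<omega> < c})"
        using Asp by auto
      also have "(space M - A) \<inter> {\<omega>\<in>space M. U \<omega> < c} = (if 0 < c then space M - A else {})"
        unfolding U_def by auto
      finally show ?thesis using AU by simp
    qed
    then show "{\<omega>\<in>space M. U \<omega> < c} \<in> events" using Eev A by auto
  qed
  have probE: "prob (E c) = c * prob A" if c: "0 \<le> c" "c \<le> 1" for c
  proof (cases "c = 0")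
    case True
    have "\<not> real m / 2^k < (0::real)" for m k by (simp add: not_less)
    then have "E c = {}" unfolding E_def using True by auto
    then show ?thesis using True by simp
  next
    case False
    then have cpos: "c > 0" using c by auto
    define mk where "mk k = nat \<lceil>c * 2^k\<rceil> - 1" for k
    have cg: "\<lceil>c * 2^k\<rceil> \<ge> 1" for k using cpos by (simp add: one_le_ceiling)
    have mk_iff: "real m / 2^k < c \<longleftrightarrow> m \<le> mk k" for m k
    proof -
      have "real m / 2^k < c \<longleftrightarrow> real m < c * 2^k" by (simp add: divide_less_eq)
      also have "\<dots> \<longleftrightarrow> int m < \<lceil>c * 2^k\<rceil>" by (simp add: less_ceiling_iff)
      also have "\<dots> \<longleftrightarrow> m \<le> mk k" unfolding mk_def using cg[of k] by linarith
      finally show ?thesis .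
    qed
    have mk_lb: "c * 2^k - 1 \<le> real (mk k)" for k
    proof -
      have n1: "nat \<lceil>c * 2^k\<rceil> \<ge> 1" using cg[of k] by linarith
      have "real (mk k) = real (nat \<lceil>c * 2^k\<rceil>) - 1" unfolding mk_def using n1 by (simp add: of_nat_diff)
      also have "real (nat \<lceil>c * 2^k\<rceil>) = of_int \<lceil>c * 2^k\<rceil>" using cg[of k] by simp
      finally have "real (mk k) = of_int \<lceil>c * 2^k\<rceil> - 1" .
      then show ?thesis using le_of_int_ceiling[of "c * 2^k"] by linarith
    qed
    have Ek: "E c = (\<Union>k. ?L k (mk k))"
    proof
      show "E c \<subseteq> (\<Union>k. ?L k (mk k))"
      proof
        fix \<omega> assume "\<omega> \<in> E c"
        then obtain k m where km: "\<omega> \<in> ?L k m" "real m / 2^k < c" unfolding E_def by (auto split: if_splits)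
        then have "m \<le> mk k" using mk_iff by auto
        then have "\<omega> \<in> ?L k (mk k)" using km lev_mono[OF al A] by blast
        then show "\<omega> \<in> (\<Union>k. ?L k (mk k))" by blast
      qed
      show "(\<Union>k. ?L k (mk k)) \<subseteq> E c" unfolding E_def using mk_iff by auto
    qed
    have inc: "incseq (\<lambda>k. ?L k (mk k))"
    proof (rule incseq_SucI)
      fix k
      have "real (2 * mk k) / 2^Suc k = real (mk k) / 2^k" by simp
      then have "real (2 * mk k) / 2^Suc k < c" using mk_iff by auto
      then have "2 * mk k \<le> mk (Suc k)" using mk_iff by blast
      then have "?L (Suc k) (2 * mk k) \<subseteq> ?L (Suc k) (mk (Suc k))" by (rule lev_mono[OF al A])
      then show "?L k (mk k) \<subseteq> ?L (Suc k) (mk (Suc k))" by simp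
    qed
    have mk_le: "mk k \<le> 2^k" for k
    proof -
      have "real (mk k) / 2^k < c" using mk_iff by auto
      then have "real (mk k) < c * 2^k" by (simp add: divide_less_eq)
      also have "\<dots> \<le> 2^k" using c by simp
      finally have "real (mk k) < 2^k" .
      then show ?thesis by (metis of_nat_less_imp_less of_nat_numeral of_nat_power less_imp_le)
    qed
    have pk: "prob (?L k (mk k)) = real (mk k) / 2^k * prob A" for k
      using lev_prob[OF al A mk_le] .
    have lim1: "(\<lambda>k. prob (?L k (mk k))) \<longlonglongrightarrow> prob (E c)"
      unfolding Ek using Lev inc by (intro finite_Lim_measure_incseq) auto
    have "(\<lambda>k. real (mk k) / 2^k) \<longlonglongrightarrow> c"
    proof (rule real_tendsto_sandwich[of "\<lambda>k. c - (1/2)^k" _ _ "\<lambda>k. c"])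
      show "\<forall>\<^sub>F k in sequentially. c - (1/2)^k \<le> real (mk k) / 2^k"
      proof (intro always_eventually allI)
        fix k
        have "(c * 2^k - 1) / 2^k \<le> real (mk k) / 2^k" using mk_lb[of k] by (simp add: divide_right_mono)
        then show "c - (1/2)^k \<le> real (mk k) / 2^k" by (simp add: field_simps power_one_over)
      qed
      have "real (mk k) / 2^k \<le> c" for k using mk_iff[of "mk k" k] by simp
      then show "\<forall>\<^sub>F k in sequentially. real (mk k) / 2^k \<le> c" by (intro always_eventually) auto
      show "(\<lambda>k. c - (1/2::real)^k) \<longlonglongrightarrow> c"
        using tendsto_diff[OF tendsto_const LIMSEQ_power_zero[of "1/2::real"]] by simp
    qed simp
    then have "(\<lambda>k. prob (?L k (mk k))) \<longlonglongrightarrow> c * prob A"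
      unfolding pk by (rule tendsto_mult_right)
    then show ?thesis using lim1 LIMSEQ_unique by blast
  qed
  define S where "S c = A \<inter> {\<omega>\<in>space M. U \<omega> \<le> c}" for c
  have Sev: "S c \<in> events" for c unfolding S_def using Umeas A by measurable
  have probS: "prob (S c) = c * prob A" if c: "0 \<le> c" "c \<le> 1" for c
  proof (cases "c = 1")
    case True
    then have "S c = A" unfolding S_def using U01 Asp by auto
    then show ?thesis using True by simp
  next
    case False
    then have c1: "c < 1" using c by auto
    have "E c \<subseteq> S c"
    proof
      fix \<omega> assume "\<omega> \<in> E c"
      then have "\<omega> \<in> A \<inter> {\<omega>\<in>space M. U \<omega> < c}" using AU[of c] by blast
      then show "\<omega> \<in> S c" unfolding S_def by auto
    qed
    then have lo: "c * prob A \<le> prob (S c)" using finite_measure_mono[OF _ Sev] probE[OF c] by metis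
    have hi: "prob (S c) \<le> c * prob A + e" if e: "e > 0" for e
    proof -
      define c' where "c' = min 1 (c + e)"
      have c': "c < c'" "c' \<le> 1" "0 \<le> c'" "c' \<le> c + e" unfolding c'_def using c1 e c by auto
      have "S c \<subseteq> E c'"
      proof
        fix \<omega> assume "\<omega> \<in> S c"
        then have "\<omega> \<in> A \<inter> {\<omega>\<in>space M. U \<omega> < c'}" unfolding S_def using c'(1) by auto
        then show "\<omega> \<in> E c'" using AU[of c'] by blast
      qed
      then have "prob (S c) \<le> prob (E c')" using Eev by (rule finite_measure_mono)
      also have "\<dots> = c' * prob A" using probE[of c'] c' by simp
      also have "\<dots> \<le> (c + e) * prob A" using c' by (intro mult_right_mono) auto
      also have "\<dots> \<le> c * prob A + e" using prob_le_1[of A] e by (simp add: distrib_right mult_left_le)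
      finally show ?thesis .
    qed
    have "prob (S c) \<le> c * prob A" by (rule field_le_epsilon) (use hi in auto)
    then show ?thesis using lo by simp
  qed
  have null: "prob (A \<inter> {\<omega>\<in>space M. U \<omega> \<le> 0 \<or> 1 \<le> U \<omega>}) = 0"
  proof -
    have sub: "A \<inter> {\<omega>\<in>space M. U \<omega> \<le> 0 \<or> 1 \<le> U \<omega>} \<subseteq> S 0 \<union> (A - E 1)"
    proof
      fix \<omega> assume w: "\<omega> \<in> A \<inter> {\<omega>\<in>space M. U \<omega> \<le> 0 \<or> 1 \<le> U \<omega>}"
      show "\<omega> \<in> S 0 \<union> (A - E 1)"
      proof (cases "U \<omega> \<le> 0")
        case True then show ?thesis using w unfolding S_def by blast
      next
        case False
        then have "\<not> U \<omega> < 1" using w by auto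
        then have "\<omega> \<notin> E 1" using AU[of 1] by blast
        then show ?thesis using w by blast
      qed
    qed
    have "prob (A - E 1) = prob A - prob (E 1)" using EA Eev A by (simp add: finite_measure_Diff)
    then have z1: "prob (A - E 1) = 0" using probE[of 1] by simp
    have "prob (A \<inter> {\<omega>\<in>space M. U \<omega> \<le> 0 \<or> 1 \<le> U \<omega>}) \<le> prob (S 0 \<union> (A - E 1))"
      using sub Sev Eev A Umeas by (intro finite_measure_mono) (auto intro!: sets.Un sets.Diff)
    also have "\<dots> \<le> prob (S 0) + prob (A - E 1)" using Sev Eev A by (intro measure_subadditive) auto
    also have "\<dots> = 0" using z1 probS[of 0] by simp
    finally show ?thesis using measure_nonneg[of M] by (simp add: order_antisym)
  qed
  show ?thesis using Umeas U01 probS null unfolding S_def by blast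
qed

lemma atomless_realize:
  assumes al: "atomless M" and A: "A \<in> events" and Z0: "(Z0 :: 'a \<Rightarrow> real) \<in> borel_measurable M"
  shows "\<exists>Z\<in>borel_measurable M. \<forall>B\<in>sets borel.
     prob (A \<inter> (Z -` B \<inter> space M)) = prob A * prob (Z0 -` B \<inter> space M)"
proof -
  obtain U where U: "U \<in> borel_measurable M" "\<And>\<omega>. 0 \<le> U \<omega> \<and> U \<omega> \<le> 1"
    "\<And>c. 0 \<le> c \<Longrightarrow> c \<le> 1 \<Longrightarrow> prob (A \<inter> {\<omega>\<in>space M. U \<omega> \<le> c}) = c * prob A"
    "prob (A \<inter> {\<omega>\<in>space M. U \<omega> \<le> 0 \<or> 1 \<le> U \<omega>}) = 0"
    using atomless_uniform[OF al A] by blast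
  define \<nu> where "\<nu> = distr M borel Z0"
  have rd: "real_distribution \<nu>" unfolding \<nu>_def using Z0 by simp
  interpret nu: cdf_distribution \<nu> using rd by (simp add: cdf_distribution_def)
  define g where "g u = (if u \<in> {0<..<1} then nu.I u else 0)" for u
  have gm: "g \<in> borel_measurable borel"
    unfolding g_def using nu.measurable_CI
    by (subst measurable_restrict_space_iff[symmetric]) auto
  define Z where "Z \<omega> = g (U \<omega>)" for \<omega>
  have Zm: "Z \<in> borel_measurable M" unfolding Z_def using gm U(1) by measurable
  define N where "N = A \<inter> {\<omega>\<in>space M. U \<omega> \<le> 0 \<or> 1 \<le> U \<omega>}"
  have Nev: "N \<in> events" unfolding N_def using A U(1) by measurable
  have Nnull: "N \<in> null_sets M" using Nev U(4) unfolding N_def by (simp add: null_sets_def emeasure_eq_measure)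
  have cdfZ: "prob (A \<inter> (Z -` {..x} \<inter> space M)) = prob A * cdf \<nu> x" for x
  proof -
    have C01: "0 \<le> cdf \<nu> x" "cdf \<nu> x \<le> 1" using nu.cdf_nonneg nu.cdf_bounded_prob by auto
    have ev1: "A \<inter> (Z -` {..x} \<inter> space M) \<in> events" using A Zm by measurable
    have ev2: "A \<inter> {\<omega>\<in>space M. U \<omega> \<le> cdf \<nu> x} \<in> events" using A U(1) by measurable
    have eq: "A \<inter> (Z -` {..x} \<inter> space M) - N = A \<inter> {\<omega>\<in>space M. U \<omega> \<le> cdf \<nu> x} - N"
    proof (intro equalityI subsetI)
      fix \<omega> assume w: "\<omega> \<in> A \<inter> (Z -` {..x} \<inter> space M) - N"
      then have u: "0 < U \<omega>" "U \<omega> < 1" unfolding N_def by auto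
      then have "Z \<omega> = nu.I (U \<omega>)" unfolding Z_def g_def by auto
      then have "nu.I (U \<omega>) \<le> x" using w by auto
      then have "U \<omega> \<le> cdf \<nu> x" using nu.pseudoinverse[OF u] by blast
      then show "\<omega> \<in> A \<inter> {\<omega>\<in>space M. U \<omega> \<le> cdf \<nu> x} - N" using w by auto
    next
      fix \<omega> assume w: "\<omega> \<in> A \<inter> {\<omega>\<in>space M. U \<omega> \<le> cdf \<nu> x} - N"
      then have u: "0 < U \<omega>" "U \<omega> < 1" unfolding N_def by auto
      then have "Z \<omega> = nu.I (U \<omega>)" unfolding Z_def g_def by auto
      moreover have "nu.I (U \<omega>) \<le> x" using nu.pseudoinverse[OF u] w by blast
      ultimately show "\<omega> \<in> A \<inter> (Z -` {..x} \<inter> space M) - N" using w by auto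
    qed
    have "prob (A \<inter> (Z -` {..x} \<inter> space M)) = prob (A \<inter> (Z -` {..x} \<inter> space M) - N)"
      using measure_Diff_null_set[OF ev1 Nnull] by simp
    also have "\<dots> = prob (A \<inter> {\<omega>\<in>space M. U \<omega> \<le> cdf \<nu> x} - N)" using eq by simp
    also have "\<dots> = prob (A \<inter> {\<omega>\<in>space M. U \<omega> \<le> cdf \<nu> x})"
      using measure_Diff_null_set[OF ev2 Nnull] by simp
    also have "\<dots> = cdf \<nu> x * prob A" using U(3)[OF C01] .
    finally show ?thesis by simp
  qed
  show ?thesis
  proof (cases "prob A = 0")
    case True
    have "prob (A \<inter> (Z -` B \<inter> space M)) = 0" if "B \<in> sets borel" for B
    proof -
      have "prob (A \<inter> (Z -` B \<inter> space M)) \<le> prob A"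
        using A by (intro finite_measure_mono) auto
      then show ?thesis using True measure_nonneg[of M] by (simp add: order_antisym)
    qed
    then show ?thesis using Zm True by auto
  next
    case False
    then have pA: "prob A > 0" using measure_nonneg[of M A] by linarith
    have e1: "emeasure M A \<noteq> 0" "emeasure M A \<noteq> \<infinity>" using pA by (auto simp: emeasure_eq_measure)
    define UA where "UA = uniform_measure M A"
    interpret UA: prob_space UA unfolding UA_def by (rule prob_space_uniform_measure[OF e1])
    have ZmA: "Z \<in> borel_measurable UA" unfolding UA_def using Zm by simp
    have rd1: "real_distribution (distr UA borel Z)" using ZmA by simp
    have "cdf (distr UA borel Z) = cdf \<nu>"
    proof
      fix x
      have "cdf (distr UA borel Z) x = measure UA (Z -` {..x} \<inter> space M)"
        unfolding cdf_def using ZmA by (simp add: measure_distr UA_def)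
      also have "\<dots> = prob (A \<inter> (Z -` {..x} \<inter> space M)) / prob A"
        unfolding UA_def using Zm e1 by (subst measure_uniform_measure) auto
      also have "\<dots> = cdf \<nu> x" using cdfZ[of x] pA by simp
      finally show "cdf (distr UA borel Z) x = cdf \<nu> x" .
    qed
    then have deq: "distr UA borel Z = \<nu>" using cdf_unique[OF rd1 rd] by simp
    have "prob (A \<inter> (Z -` B \<inter> space M)) = prob A * prob (Z0 -` B \<inter> space M)" if B: "B \<in> sets borel" for B
    proof -
      have "measure (distr UA borel Z) B = measure \<nu> B" using deq by simp
      moreover have "measure (distr UA borel Z) B = prob (A \<inter> (Z -` B \<inter> space M)) / prob A"
        using ZmA B Zm e1 by (simp add: measure_distr UA_def)
      moreover have "measure \<nu> B = prob (Z0 -` B \<inter> space M)" unfolding \<nu>_def using Z0 B by (simp add: measure_distr)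
      ultimately show ?thesis using pA by (simp add: field_simps)
    qed
    then show ?thesis using Zm by blast
  qed
qed

end



definition bitr :: "nat \<Rightarrow> real \<Rightarrow> real" where
  "bitr k u = of_int (\<lfloor>2^(Suc k) * u\<rfloor> - 2 * \<lfloor>2^k * u\<rfloor>)"

definition frr :: "nat \<Rightarrow> real \<Rightarrow> real" where
  "frr k u = 2^k * u - of_int \<lfloor>2^k * u\<rfloor>"

lemma bitr_01: "bitr k u = 0 \<or> bitr k u = 1"
proof -
  define y where "y = 2^k * u"
  have y2: "2^(Suc k) * u = 2 * y" unfolding y_def by simp
  have a: "of_int \<lfloor>y\<rfloor> \<le> y" "y < of_int \<lfloor>y\<rfloor> + 1" by linarith+
  have "2 * \<lfloor>y\<rfloor> \<le> \<lfloor>2 * y\<rfloor>" using a by (simp add: le_floor_iff)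
  moreover have "\<lfloor>2 * y\<rfloor> < 2 * \<lfloor>y\<rfloor> + 2"
  proof -
    have "of_int (2 * \<lfloor>y\<rfloor> + 2) = 2 * of_int \<lfloor>y\<rfloor> + (2::real)" by simp
    then have "2 * y < of_int (2 * \<lfloor>y\<rfloor> + 2)" using a by linarith
    then show ?thesis by (subst floor_less_iff)
  qed
  ultimately have "\<lfloor>2 * y\<rfloor> - 2 * \<lfloor>y\<rfloor> = 0 \<or> \<lfloor>2 * y\<rfloor> - 2 * \<lfloor>y\<rfloor> = 1" by linarith
  then show ?thesis unfolding bitr_def y2 y_def by auto
qed

lemma bitr_bounds: "0 \<le> bitr k u" "bitr k u \<le> 1"
  using bitr_01[of k u] by auto

lemma frr_bounds: "0 \<le> frr k u" "frr k u < 1"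
  unfolding frr_def by linarith+

lemma frr_Suc: "frr (Suc k) u = 2 * frr k u - bitr k u"
  unfolding frr_def bitr_def by (simp add: algebra_simps)

lemma frr_expand: "frr k u = (\<Sum>j<N. bitr (k + j) u / 2^(Suc j)) + frr (k + N) u / 2^N"
proof (induction N)
  case 0 then show ?case by simp
next
  case (Suc N)
  have "frr (k + N) u = bitr (k + N) u / 2 + frr (k + Suc N) u / 2"
    using frr_Suc[of "k + N" u] by (simp add: field_simps)
  then show ?case using Suc by (simp add: field_simps)
qed

lemma frr_sums: "(\<lambda>j. bitr (k + j) u / 2^(Suc j)) sums frr k u"
proof -
  have eq: "(\<Sum>j<N. bitr (k + j) u / 2^(Suc j)) = frr k u - frr (k + N) u / 2^N" for N
    using frr_expand[of k u N] by simp
  have "(\<lambda>N. frr (k + N) u / 2^N) \<longlonglongrightarrow> 0"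
  proof (rule real_tendsto_sandwich[of "\<lambda>_. 0" _ _ "\<lambda>N. (1/2)^N"])
    show "\<forall>\<^sub>F N in sequentially. 0 \<le> frr (k + N) u / 2^N" using frr_bounds by auto
    show "\<forall>\<^sub>F N in sequentially. frr (k + N) u / 2^N \<le> (1/2)^N"
      using frr_bounds by (auto simp: power_one_over divide_right_mono less_imp_le)
    show "(\<lambda>N. (1/2::real)^N) \<longlonglongrightarrow> 0" by (rule LIMSEQ_power_zero) simp
  qed simp
  then have "(\<lambda>N. frr k u - frr (k + N) u / 2^N) \<longlonglongrightarrow> frr k u - 0"
    by (intro tendsto_diff tendsto_const)
  then show ?thesis unfolding sums_def eq by simp
qed

lemma frr_0: "0 \<le> u \<Longrightarrow> u < 1 \<Longrightarrow> frr 0 u = u"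
  unfolding frr_def by (simp add: floor_eq_iff)

lemma bitr_sums: "0 \<le> u \<Longrightarrow> u < 1 \<Longrightarrow> (\<lambda>j. bitr j u / 2^(Suc j)) sums u"
  using frr_sums[of 0 u] frr_0[of u] by simp

lemma bitr_zeros: "\<exists>j\<ge>N. bitr j u = 0"
proof (rule ccontr)
  assume "\<not> (\<exists>j\<ge>N. bitr j u = 0)"
  then have one: "bitr (N + j) u = 1" for j using bitr_01 by (metis le_add1)
  have "(\<lambda>j. bitr (N + j) u / 2^(Suc j)) sums frr N u" by (rule frr_sums)
  moreover have "(\<lambda>j. bitr (N + j) u / 2^(Suc j)) = (\<lambda>j. (1/2) * (1/2)^j)"
    using one by (simp add: power_one_over)
  moreover have "(\<lambda>j. (1/2::real) * (1/2)^j) sums ((1/2) * (1 / (1 - 1/2)))"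
    by (intro sums_mult geometric_sums) simp
  ultimately have "frr N u = 1" using sums_unique2 by fastforce
  then show False using frr_bounds[of N u] by simp
qed

lemma bitr_of_sum:
  fixes c :: "nat \<Rightarrow> real"
  assumes c01: "\<And>j. c j = 0 \<or> c j = 1" and zeros: "\<And>N. \<exists>j\<ge>N. c j = 0"
  shows "bitr K (\<Sum>j. c j / 2^(Suc j)) = c K"
proof -
  define T where "T K = (\<Sum>j. c (K + j) / 2^(Suc j))" for K
  have summ: "summable (\<lambda>j. c (K + j) / 2^(Suc j))" for K
  proof (rule summable_comparison_test'[of "\<lambda>j. (1/2) * (1/2::real)^j" 0])
    show "summable (\<lambda>j. (1/2) * (1/2::real)^j)" by (intro summable_mult summable_geometric) simp
    show "norm (c (K + j) / 2^(Suc j)) \<le> (1/2) * (1/2)^j" for j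
      using c01[of "K + j"] by (auto simp: power_one_over)
  qed
  have Trec: "T K = c K / 2 + T (Suc K) / 2" for K
  proof -
    have "T K = (\<Sum>j. c (K + Suc j) / 2^(Suc (Suc j))) + c (K + 0) / 2^(Suc 0)"
      unfolding T_def using suminf_split_head[OF summ[of K]] summ[of K]
      by (subst suminf_split_initial_segment[of _ 1]) auto
    also have "(\<Sum>j. c (K + Suc j) / 2^(Suc (Suc j))) = (\<Sum>j. c (Suc K + j) / 2^(Suc j)) / 2"
      using summ[of "Suc K"] by (subst suminf_divide[symmetric]) (auto simp: field_simps)
    finally show ?thesis unfolding T_def by simp
  qed
  have cnn: "0 \<le> c j" for j using c01[of j] by auto
  have Tnn: "0 \<le> T K" for K unfolding T_def using cnn summ by (intro suminf_nonneg) auto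
  have Tle: "T K \<le> 1" for K
  proof -
    have "(\<lambda>j. (1/2) * (1/2::real)^j) sums ((1/2) * (1 / (1 - 1/2)))"
      by (intro sums_mult geometric_sums) simp
    then have "(\<Sum>j. (1/2) * (1/2::real)^j) = 1" by (simp add: sums_iff)
    moreover have "T K \<le> (\<Sum>j. (1/2) * (1/2::real)^j)" unfolding T_def
    proof (rule suminf_le)
      show "c (K + j) / 2^(Suc j) \<le> (1/2) * (1/2::real)^j" for j
        using c01[of "K + j"] by (auto simp: power_one_over)
      show "summable (\<lambda>j. (1/2) * (1/2::real)^j)" by (intro summable_mult summable_geometric) simp
    qed (rule summ)
    ultimately show ?thesis by simp
  qed
  have Tlt: "T K < 1" for K
  proof -
    obtain j where j: "j \<ge> K" "c j = 0" using zeros by blast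
    have "\<forall>K'. K' \<le> j \<longrightarrow> j - K' = d \<longrightarrow> T K' < 1" for d
    proof (induction d)
      case 0
      show ?case
      proof (intro allI impI)
        fix K' assume "K' \<le> j" "j - K' = 0"
        then have "K' = j" by simp
        then show "T K' < 1" using Trec[of K'] j Tle[of "Suc K'"] by simp
      qed
    next
      case (Suc d)
      show ?case
      proof (intro allI impI)
        fix K' assume K': "K' \<le> j" "j - K' = Suc d"
        then have "T (Suc K') < 1" using Suc.IH by auto
        then show "T K' < 1" using Trec[of K'] c01[of K'] by auto
      qed
    qed
    then show ?thesis using j by blast
  qed
  define v where "v = (\<Sum>j. c j / 2^(Suc j))"
  have vT: "v = T 0" unfolding v_def T_def by simp
  have "frr K v = T K \<and> bitr K v = c K" for K
  proof (induction K)
    case 0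
    have f0: "frr 0 v = T 0" using vT Tnn[of 0] Tlt[of 0] frr_0 by simp
    have "frr (Suc 0) v = 2 * T 0 - bitr 0 v" using frr_Suc[of 0 v] f0 by simp
    then have "frr (Suc 0) v = c 0 + T 1 - bitr 0 v" using Trec[of 0] by simp
    then have "c 0 - bitr 0 v = frr 1 v - T 1" by simp
    moreover have "-1 < frr 1 v - T 1" "frr 1 v - T 1 < 1" using frr_bounds[of 1 v] Tnn[of 1] Tlt[of 1] by auto
    ultimately have "c 0 = bitr 0 v" using c01[of 0] bitr_01[of 0 v] by auto
    then show ?case using f0 by simp
  next
    case (Suc K)
    have f: "frr (Suc K) v = T (Suc K)"
      using Suc frr_Suc[of K v] Trec[of K] by simp
    have "frr (Suc (Suc K)) v = 2 * T (Suc K) - bitr (Suc K) v" using frr_Suc[of "Suc K" v] f by simp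
    then have "c (Suc K) - bitr (Suc K) v = frr (Suc (Suc K)) v - T (Suc (Suc K))" using Trec[of "Suc K"] by simp
    moreover have "-1 < frr (Suc (Suc K)) v - T (Suc (Suc K))" "frr (Suc (Suc K)) v - T (Suc (Suc K)) < 1"
      using frr_bounds[of "Suc (Suc K)" v] Tnn[of "Suc (Suc K)"] Tlt[of "Suc (Suc K)"] by auto
    ultimately have "c (Suc K) = bitr (Suc K) v" using c01[of "Suc K"] bitr_01[of "Suc K" v] by auto
    then show ?case using f by simp
  qed
  then show ?thesis unfolding v_def by blast
qed

definition sig :: "real \<Rightarrow> real" where "sig x = 1 / (1 + exp (- x))"
definition logit :: "real \<Rightarrow> real" where "logit u = ln (u / (1 - u))"

lemma sig_bounds: "0 < sig x" "sig x < 1"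
  unfolding sig_def by (auto simp: add_pos_pos)

lemma logit_sig: "logit (sig x) = x"
proof -
  have p: "1 + exp (- x) > 0" by (simp add: add_pos_pos)
  have "1 - sig x = exp (- x) / (1 + exp (- x))" unfolding sig_def using p by (simp add: field_simps)
  then have "sig x / (1 - sig x) = 1 / exp (- x)" unfolding sig_def using p by (simp add: field_simps)
  also have "\<dots> = exp x" by (simp add: exp_minus inverse_eq_divide)
  finally show ?thesis unfolding logit_def by simp
qed

definition enc :: "nat \<Rightarrow> (nat \<Rightarrow> real) \<Rightarrow> real" where
  "enc n x = (\<Sum>j. bitr (j div n) (sig (x (j mod n))) / 2^(Suc j))"

definition dec :: "nat \<Rightarrow> nat \<Rightarrow> real \<Rightarrow> real" where
  "dec n i z = logit (\<Sum>k. bitr (k * n + i) z / 2^(Suc k))"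

lemma dec_enc:
  assumes n: "0 < n" and i: "i < n"
  shows "dec n i (enc n x) = x i"
proof -
  define c where "c j = bitr (j div n) (sig (x (j mod n)))" for j
  have c01: "c j = 0 \<or> c j = 1" for j unfolding c_def by (rule bitr_01)
  have zeros: "\<exists>j\<ge>N. c j = 0" for N
  proof -
    obtain k where k: "k \<ge> N" "bitr k (sig (x 0)) = 0" using bitr_zeros by blast
    have "(k * n) div n = k" "(k * n) mod n = 0" using n by auto
    moreover have "k \<le> k * n" using n by simp
    then have "k * n \<ge> N" using k by linarith
    ultimately show ?thesis using k unfolding c_def by (intro exI[of _ "k * n"]) auto
  qed
  have bits: "bitr j (enc n x) = c j" for j
    unfolding enc_def c_def[symmetric] by (rule bitr_of_sum[OF c01 zeros])
  have "(k * n + i) div n = k" "(k * n + i) mod n = i" for k using n i by auto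
  then have "bitr (k * n + i) (enc n x) = bitr k (sig (x i))" for k using bits unfolding c_def by simp
  then have "(\<Sum>k. bitr (k * n + i) (enc n x) / 2^(Suc k)) = sig (x i)"
    using bitr_sums[of "sig (x i)"] sig_bounds[of "x i"] by (simp add: sums_iff)
  then show ?thesis unfolding dec_def by (simp add: logit_sig)
qed

lemma bitr_measurable[measurable]: "bitr k \<in> borel_measurable borel"
  unfolding bitr_def by measurable

lemma sig_measurable[measurable]: "sig \<in> borel_measurable borel"
  unfolding sig_def by measurable

lemma logit_measurable[measurable]: "logit \<in> borel_measurable borel"
  unfolding logit_def by measurable

lemma dec_measurable[measurable]: "dec n i \<in> borel_measurable borel"
  unfolding dec_def by measurable

lemma enc_measurable:
  assumes "\<And>i. X i \<in> borel_measurable M"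
  shows "(\<lambda>\<omega>. enc n (\<lambda>i. X i \<omega>)) \<in> borel_measurable M"
  unfolding enc_def using assms by measurable



lemma cdf_distr_eq:
  assumes "f \<in> borel_measurable M"
  shows "cdf (distr M borel f) x = measure M {\<omega>\<in>space M. f \<omega> \<le> x}"
proof -
  have "cdf (distr M borel f) x = measure M (f -` {..x} \<inter> space M)"
    unfolding cdf_def using assms by (simp add: measure_distr)
  also have "f -` {..x} \<inter> space M = {\<omega>\<in>space M. f \<omega> \<le> x}" by auto
  finally show ?thesis .
qed

lemma sum_delta_mult: "k < (n::nat) \<Longrightarrow> (\<Sum>j<n. (c::real) * (if k = j then 1 else 0)) = c"
proof -
  assume k: "k < n"
  have "(\<Sum>j<n. c * (if k = j then 1 else 0)) = (\<Sum>j<n. (if k = j then c else 0))"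
    by (intro sum.cong) auto
  also have "\<dots> = c" using k by (subst sum.delta') simp_all
  finally show ?thesis .
qed

theorem corollary4:
  fixes M :: "'a measure" and n :: nat and F G :: "nat \<Rightarrow> real \<Rightarrow> real"
  assumes "prob_space M" and "atomless M"
    and "\<forall>i<n. is_cdf (F i)" and "\<forall>i<n. is_cdf (G i)"
    and "majorized n G F"
  shows "Dn M n F \<subseteq> Dn M n G"
proof
  interpret prob_space M by fact
  fix h assume "h \<in> Dn M n F"
  then obtain X where X: "\<forall>i<n. X i \<in> borel_measurable M \<and> cdf (distr M borel (X i)) = F i"
    and h: "h = cdf (distr M borel (\<lambda>\<omega>. \<Sum>i<n. X i \<omega>))" unfolding Dn_def by blast
  show "h \<in> Dn M n G"
  proof (cases "n = 0")
    case True then show ?thesis using h unfolding Dn_def by auto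
  next
    case False
    then have n: "0 < n" by simp
    obtain L where L: "doubly_stochastic n L" "\<forall>i<n. G i = (\<lambda>x. \<Sum>j<n. L i j * F j x)"
      using assms(5) unfolding majorized_def by blast
    let ?P = "{\<sigma>. \<sigma> permutes {..<n}}"
    obtain w where w: "\<forall>\<sigma>. w \<sigma> \<ge> 0"
      "\<forall>i<n. \<forall>j<n. L i j = (\<Sum>\<sigma>\<in>?P. w \<sigma> * (if \<sigma> i = j then 1 else 0))"
      using birkhoff[of n L 1] L(1) unfolding doubly_stochastic_def by blast
    have fP: "finite ?P" by (simp add: finite_permutations)
    have neP: "?P \<noteq> {}" using permutes_id by blast
    have sperm: "\<sigma> i < n" if "\<sigma> \<in> ?P" "i < n" for \<sigma> i
      using that permutes_in_image[of \<sigma> "{..<n}" i] by auto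
    have wsum: "(\<Sum>\<sigma>\<in>?P. w \<sigma>) = 1"
    proof -
      have "1 = (\<Sum>j<n. L 0 j)" using L(1) n unfolding doubly_stochastic_def by auto
      also have "\<dots> = (\<Sum>j<n. \<Sum>\<sigma>\<in>?P. w \<sigma> * (if \<sigma> 0 = j then 1 else 0))"
        using w(2) n by (intro sum.cong) auto
      also have "\<dots> = (\<Sum>\<sigma>\<in>?P. \<Sum>j<n. w \<sigma> * (if \<sigma> 0 = j then 1 else 0))" by (rule sum.swap)
      also have "\<dots> = (\<Sum>\<sigma>\<in>?P. w \<sigma>)"
        using sperm n by (intro sum.cong refl sum_delta_mult) auto
      finally show ?thesis by simp
    qed
    obtain Om where Om: "\<forall>\<sigma>\<in>?P. Om \<sigma> \<in> events \<and> Om \<sigma> \<subseteq> space M \<and> prob (Om \<sigma>) = w \<sigma>"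
      "disjoint_family_on Om ?P" "(\<Union>\<sigma>\<in>?P. Om \<sigma>) = space M"
      using atomless_partition[OF assms(2) fP neP, of w "space M"] w(1) wsum prob_space by auto
    define X' where "X' i = (if i < n then X i else (\<lambda>_. 0))" for i
    have X'm: "X' i \<in> borel_measurable M" for i using X unfolding X'_def by auto
    define Z0 where "Z0 \<omega> = enc n (\<lambda>i. X' i \<omega>)" for \<omega>
    have Z0m: "Z0 \<in> borel_measurable M" unfolding Z0_def by (rule enc_measurable[OF X'm])
    have decZ0: "dec n i (Z0 \<omega>) = X i \<omega>" if "i < n" for i \<omega>
      using dec_enc[OF n that] that unfolding Z0_def X'_def by simp
    have "\<forall>\<sigma>\<in>?P. \<exists>Z. Z \<in> borel_measurable M \<and> (\<forall>B\<in>sets borel.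
        prob (Om \<sigma> \<inter> (Z -` B \<inter> space M)) = w \<sigma> * prob (Z0 -` B \<inter> space M))"
    proof
      fix \<sigma> assume s: "\<sigma> \<in> ?P"
      then have "Om \<sigma> \<in> events" "prob (Om \<sigma>) = w \<sigma>" using Om(1) by auto
      then show "\<exists>Z. Z \<in> borel_measurable M \<and> (\<forall>B\<in>sets borel.
        prob (Om \<sigma> \<inter> (Z -` B \<inter> space M)) = w \<sigma> * prob (Z0 -` B \<inter> space M))"
        using atomless_realize[OF assms(2) _ Z0m, of "Om \<sigma>"] by auto
    qed
    then obtain Z where Z: "\<forall>\<sigma>\<in>?P. Z \<sigma> \<in> borel_measurable M \<and> (\<forall>B\<in>sets borel.
        prob (Om \<sigma> \<inter> (Z \<sigma> -` B \<inter> space M)) = w \<sigma> * prob (Z0 -` B \<inter> space M))"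
      by metis
    define Y where "Y i \<omega> = (\<Sum>\<sigma>\<in>?P. indicator (Om \<sigma>) \<omega> * dec n (\<sigma> i) (Z \<sigma> \<omega>))" for i \<omega>
    have Ym: "Y i \<in> borel_measurable M" for i
      unfolding Y_def
    proof (rule borel_measurable_sum)
      fix \<sigma> assume s: "\<sigma> \<in> ?P"
      have [measurable]: "Om \<sigma> \<in> sets M" "Z \<sigma> \<in> borel_measurable M" using s Om(1) Z by auto
      show "(\<lambda>\<omega>. indicator (Om \<sigma>) \<omega> * dec n (\<sigma> i) (Z \<sigma> \<omega>)) \<in> borel_measurable M" by measurable
    qed
    have Yon: "Y i \<omega> = dec n (\<sigma> i) (Z \<sigma> \<omega>)" if s: "\<sigma> \<in> ?P" and om: "\<omega> \<in> Om \<sigma>" for i \<omega> \<sigma>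
    proof -
      have "Y i \<omega> = (\<Sum>\<tau>\<in>?P. (if \<tau> = \<sigma> then dec n (\<sigma> i) (Z \<sigma> \<omega>) else 0))"
        unfolding Y_def
      proof (intro sum.cong refl)
        fix \<tau> assume t: "\<tau> \<in> ?P"
        show "indicator (Om \<tau>) \<omega> * dec n (\<tau> i) (Z \<tau> \<omega>) = (if \<tau> = \<sigma> then dec n (\<sigma> i) (Z \<sigma> \<omega>) else 0)"
        proof (cases "\<tau> = \<sigma>")
          case True then show ?thesis using om by simp
        next
          case False
          then have "Om \<tau> \<inter> Om \<sigma> = {}" using Om(2) s t unfolding disjoint_family_on_def by blast
          then have "\<omega> \<notin> Om \<tau>" using om by blast
          then show ?thesis using False by simp
        qed
      qed
      also have "\<dots> = dec n (\<sigma> i) (Z \<sigma> \<omega>)" using s fP by simp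
      finally show ?thesis .
    qed
    have part: "prob S = (\<Sum>\<sigma>\<in>?P. prob (Om \<sigma> \<inter> S))" if S: "S \<in> events" for S
    proof -
      have "S = (\<Union>\<sigma>\<in>?P. Om \<sigma> \<inter> S)" using Om(3) sets.sets_into_space[OF S] by blast
      moreover have "prob (\<Union>\<sigma>\<in>?P. Om \<sigma> \<inter> S) = (\<Sum>\<sigma>\<in>?P. prob (Om \<sigma> \<inter> S))"
      proof (rule finite_measure_finite_Union[OF fP])
        show "(\<lambda>\<sigma>. Om \<sigma> \<inter> S) ` ?P \<subseteq> events" using Om(1) S by auto
        show "disjoint_family_on (\<lambda>\<sigma>. Om \<sigma> \<inter> S) ?P"
          using Om(2) unfolding disjoint_family_on_def by blast
      qed
      ultimately show ?thesis by simp
    qed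
    have key: "prob (Om \<sigma> \<inter> {\<omega>\<in>space M. f (Z \<sigma> \<omega>) \<le> x}) = w \<sigma> * prob {\<omega>\<in>space M. f (Z0 \<omega>) \<le> x}"
      if s: "\<sigma> \<in> ?P" and f: "f \<in> borel_measurable borel" for \<sigma> and f :: "real \<Rightarrow> real" and x :: real
    proof -
      have B: "f -` {..x} \<in> sets borel" using measurable_sets[OF f atMost_borel[of x]] by simp
      have all: "\<forall>B\<in>sets borel. prob (Om \<sigma> \<inter> (Z \<sigma> -` B \<inter> space M)) = w \<sigma> * prob (Z0 -` B \<inter> space M)"
        using Z s by blast
      have e: "prob (Om \<sigma> \<inter> (Z \<sigma> -` (f -` {..x}) \<inter> space M)) = w \<sigma> * prob (Z0 -` (f -` {..x}) \<inter> space M)"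
        using bspec[OF all B] .
      have "{\<omega>\<in>space M. f (Z \<sigma> \<omega>) \<le> x} = Z \<sigma> -` (f -` {..x}) \<inter> space M" by auto
      moreover have "{\<omega>\<in>space M. f (Z0 \<omega>) \<le> x} = Z0 -` (f -` {..x}) \<inter> space M" by auto
      ultimately show ?thesis using e by simp
    qed
    have onOm: "Om \<sigma> \<inter> {\<omega>\<in>space M. Q (Y i \<omega>)} = Om \<sigma> \<inter> {\<omega>\<in>space M. Q (dec n (\<sigma> i) (Z \<sigma> \<omega>))}"
      if s: "\<sigma> \<in> ?P" for \<sigma> i Q using Yon[OF s] by auto
    have margY: "cdf (distr M borel (Y i)) = G i" if i: "i < n" for i
    proof
      fix x
      have ev: "{\<omega>\<in>space M. Y i \<omega> \<le> x} \<in> events" using Ym[of i] by measurable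
      have "cdf (distr M borel (Y i)) x = prob {\<omega>\<in>space M. Y i \<omega> \<le> x}" by (rule cdf_distr_eq[OF Ym])
      also have "\<dots> = (\<Sum>\<sigma>\<in>?P. prob (Om \<sigma> \<inter> {\<omega>\<in>space M. Y i \<omega> \<le> x}))" by (rule part[OF ev])
      also have "\<dots> = (\<Sum>\<sigma>\<in>?P. w \<sigma> * F (\<sigma> i) x)"
      proof (intro sum.cong refl)
        fix \<sigma> assume s: "\<sigma> \<in> ?P"
        have "prob (Om \<sigma> \<inter> {\<omega>\<in>space M. Y i \<omega> \<le> x}) =
            prob (Om \<sigma> \<inter> {\<omega>\<in>space M. dec n (\<sigma> i) (Z \<sigma> \<omega>) \<le> x})"
          using onOm[OF s, of "\<lambda>y. y \<le> x" i] by simp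
        also have "\<dots> = w \<sigma> * prob {\<omega>\<in>space M. dec n (\<sigma> i) (Z0 \<omega>) \<le> x}"
          by (rule key[OF s dec_measurable])
        also have "{\<omega>\<in>space M. dec n (\<sigma> i) (Z0 \<omega>) \<le> x} = {\<omega>\<in>space M. X (\<sigma> i) \<omega> \<le> x}"
          using decZ0 sperm[OF s i] by simp
        also have "prob {\<omega>\<in>space M. X (\<sigma> i) \<omega> \<le> x} = F (\<sigma> i) x"
          using X sperm[OF s i] cdf_distr_eq[of "X (\<sigma> i)" M x] by auto
        finally show "prob (Om \<sigma> \<inter> {\<omega>\<in>space M. Y i \<omega> \<le> x}) = w \<sigma> * F (\<sigma> i) x" .
      qed
      also have "\<dots> = (\<Sum>\<sigma>\<in>?P. \<Sum>j<n. w \<sigma> * (if \<sigma> i = j then 1 else 0) * F j x)"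
      proof (intro sum.cong refl)
        fix \<sigma> assume s: "\<sigma> \<in> ?P"
        have "(\<Sum>j<n. w \<sigma> * (if \<sigma> i = j then 1 else 0) * F j x) = (\<Sum>j<n. (if \<sigma> i = j then w \<sigma> * F (\<sigma> i) x else 0))"
          by (intro sum.cong) auto
        also have "\<dots> = w \<sigma> * F (\<sigma> i) x" using sperm[OF s i] by simp
        finally show "w \<sigma> * F (\<sigma> i) x = (\<Sum>j<n. w \<sigma> * (if \<sigma> i = j then 1 else 0) * F j x)" by simp
      qed
      also have "\<dots> = (\<Sum>j<n. \<Sum>\<sigma>\<in>?P. w \<sigma> * (if \<sigma> i = j then 1 else 0) * F j x)" by (rule sum.swap)
      also have "\<dots> = (\<Sum>j<n. L i j * F j x)"
      proof (intro sum.cong refl)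
        fix j assume "j \<in> {..<n}"
        then have "L i j = (\<Sum>\<sigma>\<in>?P. w \<sigma> * (if \<sigma> i = j then 1 else 0))" using w(2) i by auto
        then show "(\<Sum>\<sigma>\<in>?P. w \<sigma> * (if \<sigma> i = j then 1 else 0) * F j x) = L i j * F j x"
          by (simp add: sum_distrib_right)
      qed
      also have "\<dots> = G i x" using L(2) i by simp
      finally show "cdf (distr M borel (Y i)) x = G i x" .
    qed
    define s where "s z = (\<Sum>j<n. dec n j z)" for z
    have sm: "s \<in> borel_measurable borel" unfolding s_def by measurable
    have sumY: "(\<Sum>i<n. Y i \<omega>) = s (Z \<sigma> \<omega>)" if sg: "\<sigma> \<in> ?P" and om: "\<omega> \<in> Om \<sigma>" for \<sigma> \<omega>
    proof -
      have "(\<Sum>i<n. Y i \<omega>) = (\<Sum>i<n. dec n (\<sigma> i) (Z \<sigma> \<omega>))" using Yon[OF sg om] by simp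
      also have "\<dots> = (\<Sum>j<n. dec n j (Z \<sigma> \<omega>))"
        using sum.permute[of \<sigma> "{..<n}" "\<lambda>j. dec n j (Z \<sigma> \<omega>)"] sg by (simp add: o_def)
      finally show ?thesis unfolding s_def .
    qed
    have sZ0: "s (Z0 \<omega>) = (\<Sum>i<n. X i \<omega>)" for \<omega> unfolding s_def using decZ0 by simp
    have SYm: "(\<lambda>\<omega>. \<Sum>i<n. Y i \<omega>) \<in> borel_measurable M" using Ym by measurable
    have SXm: "(\<lambda>\<omega>. \<Sum>i<n. X i \<omega>) \<in> borel_measurable M" using X by (intro borel_measurable_sum) auto
    have "cdf (distr M borel (\<lambda>\<omega>. \<Sum>i<n. Y i \<omega>)) = h"
    proof
      fix x
      have ev: "{\<omega>\<in>space M. (\<Sum>i<n. Y i \<omega>) \<le> x} \<in> events" using SYm by measurable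
      have "cdf (distr M borel (\<lambda>\<omega>. \<Sum>i<n. Y i \<omega>)) x = prob {\<omega>\<in>space M. (\<Sum>i<n. Y i \<omega>) \<le> x}"
        by (rule cdf_distr_eq[OF SYm])
      also have "\<dots> = (\<Sum>\<sigma>\<in>?P. prob (Om \<sigma> \<inter> {\<omega>\<in>space M. (\<Sum>i<n. Y i \<omega>) \<le> x}))" by (rule part[OF ev])
      also have "\<dots> = (\<Sum>\<sigma>\<in>?P. w \<sigma> * prob {\<omega>\<in>space M. (\<Sum>i<n. X i \<omega>) \<le> x})"
      proof (intro sum.cong refl)
        fix \<sigma> assume sg: "\<sigma> \<in> ?P"
        have "Om \<sigma> \<inter> {\<omega>\<in>space M. (\<Sum>i<n. Y i \<omega>) \<le> x} = Om \<sigma> \<inter> {\<omega>\<in>space M. s (Z \<sigma> \<omega>) \<le> x}"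
          using sumY[OF sg] by auto
        then have "prob (Om \<sigma> \<inter> {\<omega>\<in>space M. (\<Sum>i<n. Y i \<omega>) \<le> x}) = w \<sigma> * prob {\<omega>\<in>space M. s (Z0 \<omega>) \<le> x}"
          using key[OF sg sm] by simp
        then show "prob (Om \<sigma> \<inter> {\<omega>\<in>space M. (\<Sum>i<n. Y i \<omega>) \<le> x}) = w \<sigma> * prob {\<omega>\<in>space M. (\<Sum>i<n. X i \<omega>) \<le> x}"
          using sZ0 by simp
      qed
      also have "\<dots> = prob {\<omega>\<in>space M. (\<Sum>i<n. X i \<omega>) \<le> x}" using wsum by (simp add: sum_distrib_right[symmetric])
      also have "\<dots> = h x" unfolding h by (rule cdf_distr_eq[OF SXm, symmetric])
      finally show "cdf (distr M borel (\<lambda>\<omega>. \<Sum>i<n. Y i \<omega>)) x = h x" .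
    qed
    then show ?thesis unfolding Dn_def using Ym margY by blast
  qed
qed

end
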